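(* Let $I=[a,b]$ and $u\in W^{2,\infty}(I)^2$ with $|u'|^2=1$ on $I$. Set $\lambda:=-|u''|^2$ and $G_u:=\{v\in H^2(I)^2: u'\cdot v'=0 \text{ on } I,\ v(a)=0,\ v'(a)=0\}$. Then there exists $\alpha>0$ such that $$a_\lambda(v,v)=\int_I |v''|^2+\lambda|v'|^2\,dx\ \ge\ \alpha\|v\|_{H^2(I)^2}^2\quad\text{for all }v\in G_u.$$
   Context: $a_\lambda(v,w)=\int_I v''\cdot w''+\lambda\,v'\cdot w'\,dx$. *)

theory Defs
  imports "HOL-Analysis.Analysis"
begin

text \<open>One-dimensional Sobolev functions on I = [a,b] are represented by their
  (absolutely) continuous representative together with their (weak) derivatives.
  \<open>ac_with_deriv a b f g\<close>: g is integrable on [a,b] and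
  f x = f a + int_a^x g for all x in [a,b], i.e. f is absolutely continuous on [a,b]
  with derivative g (almost everywhere), which is the weak derivative of f.\<close>
definition ac_with_deriv ::
  "real \<Rightarrow> real \<Rightarrow> (real \<Rightarrow> 'a::{banach,second_countable_topology}) \<Rightarrow> (real \<Rightarrow> 'a) \<Rightarrow> bool" where
  "ac_with_deriv a b f g \<longleftrightarrow>
     set_integrable lborel {a..b} g \<and>
     (\<forall>x\<in>{a..b}. f x = f a + (LINT t:{a..x}|lborel. g t))"

definition H2_with_derivs ::
  "real \<Rightarrow> real \<Rightarrow> (real \<Rightarrow> real^2) \<Rightarrow> (real \<Rightarrow> real^2) \<Rightarrow> (real \<Rightarrow> real^2) \<Rightarrow> bool" where
  "H2_with_derivs a b v v1 v2 \<longleftrightarrow>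
     ac_with_deriv a b v v1 \<and> ac_with_deriv a b v1 v2 \<and>
     set_integrable lborel {a..b} (\<lambda>x. (norm (v2 x))\<^sup>2)"

definition W2inf_with_derivs ::
  "real \<Rightarrow> real \<Rightarrow> (real \<Rightarrow> real^2) \<Rightarrow> (real \<Rightarrow> real^2) \<Rightarrow> (real \<Rightarrow> real^2) \<Rightarrow> bool" where
  "W2inf_with_derivs a b u u1 u2 \<longleftrightarrow>
     ac_with_deriv a b u u1 \<and> ac_with_deriv a b u1 u2 \<and>
     (\<exists>C. AE x in lborel. x \<in> {a..b} \<longrightarrow> norm (u2 x) \<le> C)"

definition H2_norm_sq ::
  "real \<Rightarrow> real \<Rightarrow> (real \<Rightarrow> real^2) \<Rightarrow> (real \<Rightarrow> real^2) \<Rightarrow> (real \<Rightarrow> real^2) \<Rightarrow> real" where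
  "H2_norm_sq a b v v1 v2 =
     (LINT x:{a..b}|lborel. (norm (v x))\<^sup>2 + (norm (v1 x))\<^sup>2 + (norm (v2 x))\<^sup>2)"

definition a_form ::
  "real \<Rightarrow> real \<Rightarrow> (real \<Rightarrow> real) \<Rightarrow> (real \<Rightarrow> real^2) \<Rightarrow> (real \<Rightarrow> real^2)
     \<Rightarrow> (real \<Rightarrow> real^2) \<Rightarrow> (real \<Rightarrow> real^2) \<Rightarrow> real" where
  "a_form a b lam v1 v2 w1 w2 =
     (LINT x:{a..b}|lborel. v2 x \<bullet> w2 x + lam x * (v1 x \<bullet> w1 x))"

end

theory Submission
  imports Defs
begin


lemma ac_HK:
  fixes f g :: "real \<Rightarrow> 'a::euclidean_space"
  assumes "ac_with_deriv a b f g"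
  shows "g integrable_on {a..b}" "\<And>x. x \<in> {a..b} \<Longrightarrow> f x = f a + integral {a..x} g"
proof -
  have si: "set_integrable lborel {a..b} g" using assms unfolding ac_with_deriv_def by blast
  then show "g integrable_on {a..b}" by (rule set_borel_integral_eq_integral)
  fix x assume x: "x \<in> {a..b}"
  have "set_integrable lborel {a..x} g"
    by (rule set_integrable_subset[OF si]) (use x in auto)
  then have e2: "(LINT t:{a..x}|lborel. g t) = integral {a..x} g" by (rule set_borel_integral_eq_integral)
  have e1: "f x = f a + (LINT t:{a..x}|lborel. g t)" using assms x unfolding ac_with_deriv_def by blast
  show "f x = f a + integral {a..x} g" using e1 e2 by metis
qed

lemma ac_cont:
  fixes f g :: "real \<Rightarrow> 'a::euclidean_space"
  assumes "ac_with_deriv a b f g"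
  shows "continuous_on {a..b} f"
proof -
  have "continuous_on {a..b} (\<lambda>x. f a + integral {a..x} g)"
    by (intro continuous_intros indefinite_integral_continuous_1 ac_HK(1)[OF assms])
  then show ?thesis
  proof (rule continuous_on_eq)
    fix x assume "x \<in> {a..b}"
    then show "f a + integral {a..x} g = f x" using ac_HK(2)[OF assms] by metis
  qed
qed

lemma ac_diff_integral:
  fixes f g :: "real \<Rightarrow> 'a::euclidean_space"
  assumes "ac_with_deriv a b f g" "a \<le> x" "x \<le> y" "y \<le> b"
  shows "integral {x..y} g = f y - f x"
proof -
  have gi: "g integrable_on {a..b}" by (rule ac_HK(1)[OF assms(1)])
  have gy: "g integrable_on {a..y}" by (rule integrable_on_subinterval[OF gi]) (use assms in auto)
  have c: "integral {a..x} g + integral {x..y} g = integral {a..y} g"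
    by (rule Henstock_Kurzweil_Integration.integral_combine) (use assms gy in auto)
  have ex: "f x = f a + integral {a..x} g" by (rule ac_HK(2)[OF assms(1)]) (use assms in auto)
  have ey: "f y = f a + integral {a..y} g" by (rule ac_HK(2)[OF assms(1)]) (use assms in auto)
  show ?thesis by (simp add: ex ey c[symmetric])
qed



lemma ac_const_deriv_zero:
  fixes F G :: "real \<Rightarrow> real"
  assumes ac: "ac_with_deriv a b F G" and const: "\<forall>x\<in>{a..b}. F x = c"
  shows "AE x in lborel. x \<in> {a..b} \<longrightarrow> G x = 0"
proof -
  define f where "f = (\<lambda>t. indicator {a..b} t * G t)"
  have "integrable lborel f"
    using ac unfolding ac_with_deriv_def set_integrable_def f_def by simp
  then have fU: "f integrable_on UNIV"
    using has_integral_integral_lborel integrable_on_def by blast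
  have "\<And>c d. f integrable_on cbox c d"
    by (rule integrable_on_subcbox[OF fU]) auto
  then obtain N where negN: "negligible N" and
    N: "\<And>x e. \<lbrakk>x \<notin> N; 0 < e\<rbrakk> \<Longrightarrow>
               \<exists>d>0. \<forall>h. 0 < h \<and> h < d \<longrightarrow>
                         norm(integral (cbox x (x + h *\<^sub>R One)) f /\<^sub>R h ^ DIM(real) - f x) < e"
    using integrable_ccontinuous_explicit by blast
  have key: "G x = 0" if x: "x \<in> {a<..<b}" "x \<notin> N" for x
  proof -
    have "\<bar>G x\<bar> < e" if e: "e > 0" for e
    proof -
      obtain d where d: "d > 0" and dd: "\<And>h. 0 < h \<and> h < d \<longrightarrow>
                         norm(integral (cbox x (x + h *\<^sub>R One)) f /\<^sub>R h ^ DIM(real) - f x) < e"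
        using N[OF x(2) e] by blast
      define h where "h = min d (b - x) / 2"
      have h: "0 < h" "h < d" "x + h \<le> b" using d x unfolding h_def by (auto simp: min_def field_simps)
      have "integral {x..x+h} f = integral {x..x+h} G"
        by (rule integral_cong) (use x h in \<open>auto simp: f_def indicator_def\<close>)
      also have "\<dots> = F (x+h) - F x"
        by (rule ac_diff_integral[OF ac]) (use x h in auto)
      also have "\<dots> = 0" using const x h by auto
      finally have "integral {x..x+h} f = 0" .
      moreover have "cbox x (x + h *\<^sub>R One) = {x..x+h}" by (simp add: cbox_interval)
      ultimately have "norm (0 - f x) < e" using dd[of h] h by simp
      moreover have "f x = G x" using x by (simp add: f_def indicator_def)
      ultimately show ?thesis by simp
    qed
    from this[of "\<bar>G x\<bar>"] show ?thesis by force
  qed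
  have "AE x in lebesgue. x \<in> {a..b} \<longrightarrow> G x = 0"
    unfolding eventually_ae_filter_negligible
  proof (intro exI conjI)
    show "negligible (insert a (insert b N))" using negN by simp
    show "{x. \<not> (x \<in> {a..b} \<longrightarrow> G x = 0)} \<subseteq> insert a (insert b N)"
      using key by fastforce
  qed
  then show ?thesis by (simp add: AE_completion_iff)
qed



lemma fubini_tri:
  fixes g k :: "real \<Rightarrow> real"
  assumes gi: "integrable lborel g" and ki: "integrable lborel k"
  shows "(\<integral>t. indicator {a..x} t * g t * (\<integral>s. indicator {a..t} s * k s \<partial>lborel) \<partial>lborel)
       = (\<integral>s. indicator {a..x} s * k s * (\<integral>t. indicator {s..x} t * g t \<partial>lborel) \<partial>lborel)"
proof -
  have [measurable]: "g \<in> borel_measurable lborel" "k \<in> borel_measurable lborel"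
    using gi ki by auto
  define \<Phi> where "\<Phi> = (\<lambda>s t. if a \<le> s \<and> s \<le> t \<and> t \<le> x then g t * k s else (0::real))"
  have \<Phi>m[measurable]: "case_prod \<Phi> \<in> borel_measurable (lborel \<Otimes>\<^sub>M lborel)"
    unfolding \<Phi>_def by measurable
  have int: "integrable (lborel \<Otimes>\<^sub>M lborel) (case_prod \<Phi>)"
  proof (rule lborel_pair.Fubini_integrable)
    show "case_prod \<Phi> \<in> borel_measurable (lborel \<Otimes>\<^sub>M lborel)" by (rule \<Phi>m)
    have i2: "integrable lborel (\<lambda>t. \<Phi> s t)" for s
    proof (rule Bochner_Integration.integrable_bound[where M=lborel and f="\<lambda>t. k s * g t"])
      show "integrable lborel (\<lambda>t. k s * g t)" using gi by simp
      show "(\<lambda>t. \<Phi> s t) \<in> borel_measurable lborel" unfolding \<Phi>_def by measurable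
      show "AE t in lborel. norm (\<Phi> s t) \<le> norm (k s * g t)"
        by (intro AE_I2) (auto simp: \<Phi>_def abs_mult)
    qed
    then show "AE s in lborel. integrable lborel (\<lambda>t. case (s, t) of (s, t) \<Rightarrow> \<Phi> s t)" by simp
    show "integrable lborel (\<lambda>s. \<integral>t. norm (case (s, t) of (s, t) \<Rightarrow> \<Phi> s t) \<partial>lborel)"
    proof (rule Bochner_Integration.integrable_bound[where M=lborel and f="\<lambda>s. k s * (\<integral>t. norm (g t) \<partial>lborel)"])
      show "integrable lborel (\<lambda>s. k s * (\<integral>t. norm (g t) \<partial>lborel))" using ki by simp
      have "(\<lambda>p. norm (case_prod \<Phi> p)) \<in> borel_measurable (lborel \<Otimes>\<^sub>M lborel)" by measurable
      then show "(\<lambda>s. \<integral>t. norm (case (s, t) of (s, t) \<Rightarrow> \<Phi> s t) \<partial>lborel) \<in> borel_measurable lborel"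
        using lborel_pair.borel_measurable_lebesgue_integral by simp
      have "norm (\<integral>t. norm (\<Phi> s t) \<partial>lborel) \<le> norm (k s * (\<integral>t. norm (g t) \<partial>lborel))" for s
      proof -
        have "norm (\<integral>t. norm (\<Phi> s t) \<partial>lborel) = (\<integral>t. norm (\<Phi> s t) \<partial>lborel)"
          by (simp add: integral_nonneg_AE)
        also have "\<dots> \<le> (\<integral>t. norm (k s) * norm (g t) \<partial>lborel)"
          by (intro Bochner_Integration.integral_mono i2 integrable_norm) (use gi in \<open>auto simp: \<Phi>_def abs_mult\<close>)
        also have "\<dots> = norm (k s * (\<integral>t. norm (g t) \<partial>lborel))"
          by (simp add: abs_mult integral_nonneg_AE)
        finally show ?thesis .
      qed
      then show "AE s in lborel. norm (\<integral>t. norm (case (s, t) of (s, t) \<Rightarrow> \<Phi> s t) \<partial>lborel)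
          \<le> norm (k s * (\<integral>t. norm (g t) \<partial>lborel))" by simp
    qed
  qed
  have F: "(\<integral>t. (\<integral>s. \<Phi> s t \<partial>lborel) \<partial>lborel) = (\<integral>s. (\<integral>t. \<Phi> s t \<partial>lborel) \<partial>lborel)"
    using lborel_pair.Fubini_integral[OF int] .
  have L: "(\<integral>s. \<Phi> s t \<partial>lborel) = indicator {a..x} t * g t * (\<integral>s. indicator {a..t} s * k s \<partial>lborel)" for t
  proof -
    have "(\<integral>s. \<Phi> s t \<partial>lborel) = (\<integral>s. (indicator {a..x} t * g t) * (indicator {a..t} s * k s) \<partial>lborel)"
      by (rule Bochner_Integration.integral_cong) (auto simp: \<Phi>_def indicator_def)
    then show ?thesis by simp
  qed
  have R: "(\<integral>t. \<Phi> s t \<partial>lborel) = indicator {a..x} s * k s * (\<integral>t. indicator {s..x} t * g t \<partial>lborel)" for s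
  proof -
    have "(\<integral>t. \<Phi> s t \<partial>lborel) = (\<integral>t. (indicator {a..x} s * k s) * (indicator {s..x} t * g t) \<partial>lborel)"
      by (rule Bochner_Integration.integral_cong) (auto simp: \<Phi>_def indicator_def)
    then show ?thesis by simp
  qed
  show ?thesis using F unfolding L R .
qed



lemma set_int_sub:
  fixes f :: "real \<Rightarrow> 'a::euclidean_space"
  assumes "set_integrable lborel {a..b} f" "a \<le> c" "d \<le> b"
  shows "set_integrable lborel {c..d} f" "(LINT t:{c..d}|lborel. f t) = integral {c..d} f"
    "f integrable_on {c..d}"
proof -
  show si: "set_integrable lborel {c..d} f"
    by (rule set_integrable_subset[OF assms(1)]) (use assms in auto)
  show "(LINT t:{c..d}|lborel. f t) = integral {c..d} f" "f integrable_on {c..d}"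
    using set_borel_integral_eq_integral[OF si] by auto
qed

lemma set_integrable_mult_cont:
  fixes g H :: "real \<Rightarrow> real"
  assumes gi: "set_integrable lborel {a..b} g" and cH: "continuous_on {a..b} H"
  shows "set_integrable lborel {a..b} (\<lambda>t. g t * H t)"
proof -
  have "bounded (H ` {a..b})"
    by (intro compact_imp_bounded compact_continuous_image cH compact_Icc)
  then obtain B where B: "\<And>t. t \<in> {a..b} \<Longrightarrow> norm (H t) \<le> B"
    unfolding bounded_iff by blast
  have gI: "integrable lborel (\<lambda>t. indicator {a..b} t *\<^sub>R g t)"
    using gi unfolding set_integrable_def .
  have mH: "(\<lambda>t. indicator {a..b} t *\<^sub>R H t) \<in> borel_measurable borel"
    by (rule borel_measurable_continuous_on_indicator[OF _ cH]) auto
  show ?thesis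
    unfolding set_integrable_def
  proof (rule Bochner_Integration.integrable_bound[where f="\<lambda>t. B * (indicator {a..b} t *\<^sub>R g t)"])
    show "integrable lborel (\<lambda>t. B * (indicator {a..b} t *\<^sub>R g t))"
      using gI by simp
    have "(\<lambda>t. (indicator {a..b} t *\<^sub>R g t) * (indicator {a..b} t *\<^sub>R H t)) \<in> borel_measurable lborel"
      using gI mH by measurable
    moreover have "(\<lambda>t. (indicator {a..b} t *\<^sub>R g t) * (indicator {a..b} t *\<^sub>R H t))
        = (\<lambda>t. indicator {a..b} t *\<^sub>R (g t * H t))"
      by (auto simp: indicator_def)
    ultimately show "(\<lambda>t. indicator {a..b} t *\<^sub>R (g t * H t)) \<in> borel_measurable lborel" by simp
    have "norm (indicator {a..b} t *\<^sub>R (g t * H t)) \<le> norm (B * (indicator {a..b} t *\<^sub>R g t))" for t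
    proof (cases "t \<in> {a..b}")
      case True
      have "\<bar>g t * H t\<bar> = \<bar>g t\<bar> * \<bar>H t\<bar>" by (simp add: abs_mult)
      also have "\<dots> \<le> \<bar>g t\<bar> * B" using B[OF True] by (intro mult_left_mono) auto
      also have "\<dots> \<le> \<bar>B * g t\<bar>" by (simp add: abs_mult mult.commute mult_right_mono)
      finally show ?thesis using True by simp
    qed simp
    then show "AE t in lborel. norm (indicator {a..b} t *\<^sub>R (g t * H t)) \<le> norm (B * (indicator {a..b} t *\<^sub>R g t))"
      by simp
  qed
qed

lemma ac_mult:
  fixes F g H k :: "real \<Rightarrow> real"
  assumes acF: "ac_with_deriv a b F g" and acH: "ac_with_deriv a b H k"
  shows "ac_with_deriv a b (\<lambda>x. F x * H x) (\<lambda>x. g x * H x + F x * k x)"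
proof -
  have gs: "set_integrable lborel {a..b} g" using acF unfolding ac_with_deriv_def by blast
  have ks: "set_integrable lborel {a..b} k" using acH unfolding ac_with_deriv_def by blast
  have cF: "continuous_on {a..b} F" by (rule ac_cont[OF acF])
  have cH: "continuous_on {a..b} H" by (rule ac_cont[OF acH])
  have gH: "set_integrable lborel {a..b} (\<lambda>t. g t * H t)" by (rule set_integrable_mult_cont[OF gs cH])
  have kF: "set_integrable lborel {a..b} (\<lambda>t. k t * F t)" by (rule set_integrable_mult_cont[OF ks cF])
  then have Fk: "set_integrable lborel {a..b} (\<lambda>t. F t * k t)" by (simp add: mult.commute)
  have si: "set_integrable lborel {a..b} (\<lambda>t. g t * H t + F t * k t)"
    using gH Fk by (rule set_integral_add(1))
  have eq: "F x * H x = F a * H a + (LINT t:{a..x}|lborel. g t * H t + F t * k t)" if x: "x \<in> {a..b}" for x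
  proof -
    have ax: "a \<le> x" "x \<le> b" using x by auto
    define G0 where "G0 = (\<lambda>t. indicator {a..b} t * g t)"
    define K0 where "K0 = (\<lambda>t. indicator {a..b} t * k t)"
    have G0i: "integrable lborel G0" using gs unfolding set_integrable_def G0_def by simp
    have K0i: "integrable lborel K0" using ks unfolding set_integrable_def K0_def by simp
    note fub = fubini_tri[OF G0i K0i, of a x]
    have inK: "(\<integral>s. indicator {a..t} s * K0 s \<partial>lborel) = H t - H a" if t: "t \<in> {a..x}" for t
    proof -
      have "(\<integral>s. indicator {a..t} s * K0 s \<partial>lborel) = (LINT s:{a..t}|lborel. k s)"
        unfolding set_lebesgue_integral_def K0_def
        by (rule Bochner_Integration.integral_cong[OF refl]) (use t ax in \<open>auto simp: indicator_def\<close>)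
      also have "\<dots> = integral {a..t} k" by (rule set_int_sub(2)[OF ks]) (use t ax in auto)
      also have "\<dots> = H t - H a" by (rule ac_diff_integral[OF acH]) (use t ax in auto)
      finally show ?thesis .
    qed
    have inG: "(\<integral>t. indicator {s..x} t * G0 t \<partial>lborel) = F x - F s" if s: "s \<in> {a..x}" for s
    proof -
      have "(\<integral>t. indicator {s..x} t * G0 t \<partial>lborel) = (LINT t:{s..x}|lborel. g t)"
        unfolding set_lebesgue_integral_def G0_def
        by (rule Bochner_Integration.integral_cong[OF refl]) (use s ax in \<open>auto simp: indicator_def\<close>)
      also have "\<dots> = integral {s..x} g" by (rule set_int_sub(2)[OF gs]) (use s ax in auto)
      also have "\<dots> = F x - F s" by (rule ac_diff_integral[OF acF]) (use s ax in auto)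
      finally show ?thesis .
    qed
    have cH': "continuous_on {a..b} (\<lambda>t. H t - H a)" by (intro continuous_intros cH)
    have cF': "continuous_on {a..b} (\<lambda>t. F x - F t)" by (intro continuous_intros cF)
    have LHS: "(\<integral>t. indicator {a..x} t * G0 t * (\<integral>s. indicator {a..t} s * K0 s \<partial>lborel) \<partial>lborel)
        = integral {a..x} (\<lambda>t. g t * (H t - H a))"
    proof -
      have "(\<integral>t. indicator {a..x} t * G0 t * (\<integral>s. indicator {a..t} s * K0 s \<partial>lborel) \<partial>lborel)
          = (LINT t:{a..x}|lborel. g t * (H t - H a))"
        unfolding set_lebesgue_integral_def
      proof (rule Bochner_Integration.integral_cong[OF refl])
        fix t show "indicator {a..x} t * G0 t * (\<integral>s. indicator {a..t} s * K0 s \<partial>lborel)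
            = indicator {a..x} t *\<^sub>R (g t * (H t - H a))"
        proof (cases "t \<in> {a..x}")
          case True
          then show ?thesis using inK[OF True] ax by (simp add: G0_def indicator_def)
        qed simp
      qed
      also have "\<dots> = integral {a..x} (\<lambda>t. g t * (H t - H a))"
        by (rule set_int_sub(2)[OF set_integrable_mult_cont[OF gs cH']]) (use ax in auto)
      finally show ?thesis .
    qed
    have RHS: "(\<integral>s. indicator {a..x} s * K0 s * (\<integral>t. indicator {s..x} t * G0 t \<partial>lborel) \<partial>lborel)
        = integral {a..x} (\<lambda>s. k s * (F x - F s))"
    proof -
      have "(\<integral>s. indicator {a..x} s * K0 s * (\<integral>t. indicator {s..x} t * G0 t \<partial>lborel) \<partial>lborel)
          = (LINT s:{a..x}|lborel. k s * (F x - F s))"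
        unfolding set_lebesgue_integral_def
      proof (rule Bochner_Integration.integral_cong[OF refl])
        fix s show "indicator {a..x} s * K0 s * (\<integral>t. indicator {s..x} t * G0 t \<partial>lborel)
            = indicator {a..x} s *\<^sub>R (k s * (F x - F s))"
        proof (cases "s \<in> {a..x}")
          case True
          then show ?thesis using inG[OF True] ax by (simp add: K0_def indicator_def)
        qed simp
      qed
      also have "\<dots> = integral {a..x} (\<lambda>s. k s * (F x - F s))"
        by (rule set_int_sub(2)[OF set_integrable_mult_cont[OF ks cF']]) (use ax in auto)
      finally show ?thesis .
    qed
    have ig: "g integrable_on {a..x}" by (rule set_int_sub(3)[OF gs]) (use ax in auto)
    have ik: "k integrable_on {a..x}" by (rule set_int_sub(3)[OF ks]) (use ax in auto)
    have igH: "(\<lambda>t. g t * H t) integrable_on {a..x}" by (rule set_int_sub(3)[OF gH]) (use ax in auto)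
    have iFk: "(\<lambda>t. F t * k t) integrable_on {a..x}" by (rule set_int_sub(3)[OF Fk]) (use ax in auto)
    have e1: "integral {a..x} (\<lambda>t. g t * (H t - H a))
        = integral {a..x} (\<lambda>t. g t * H t) - integral {a..x} g * H a"
    proof -
      have "(\<lambda>t. g t * (H t - H a)) = (\<lambda>t. g t * H t - g t * H a)" by (simp add: algebra_simps)
      then show ?thesis
        using integral_diff[OF igH integrable_on_mult_left[OF ig, of "H a"]] by simp
    qed
    have e2: "integral {a..x} (\<lambda>s. k s * (F x - F s))
        = integral {a..x} k * F x - integral {a..x} (\<lambda>t. F t * k t)"
    proof -
      have "(\<lambda>s. k s * (F x - F s)) = (\<lambda>s. k s * F x - F s * k s)" by (simp add: algebra_simps)
      then show ?thesis
        using integral_diff[OF integrable_on_mult_left[OF ik, of "F x"] iFk] by simp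
    qed
    have e3: "integral {a..x} g = F x - F a" by (rule ac_diff_integral[OF acF]) (use ax in auto)
    have e4: "integral {a..x} k = H x - H a" by (rule ac_diff_integral[OF acH]) (use ax in auto)
    have e5: "(LINT t:{a..x}|lborel. g t * H t + F t * k t)
        = integral {a..x} (\<lambda>t. g t * H t) + integral {a..x} (\<lambda>t. F t * k t)"
    proof -
      have "(LINT t:{a..x}|lborel. g t * H t + F t * k t) = integral {a..x} (\<lambda>t. g t * H t + F t * k t)"
        by (rule set_int_sub(2)[OF si]) (use ax in auto)
      also have "\<dots> = integral {a..x} (\<lambda>t. g t * H t) + integral {a..x} (\<lambda>t. F t * k t)"
        by (rule integral_add[OF igH iFk])
      finally show ?thesis .
    qed
    have "integral {a..x} (\<lambda>t. g t * H t) - (F x - F a) * H a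
        = (H x - H a) * F x - integral {a..x} (\<lambda>t. F t * k t)"
      using fub LHS RHS e1 e2 e3 e4 by simp
    then show ?thesis unfolding e5 by (simp add: algebra_simps)
  qed
  show ?thesis unfolding ac_with_deriv_def using si eq by blast
qed



lemma ac_linear:
  fixes f g :: "real \<Rightarrow> 'a::euclidean_space" and T :: "'a \<Rightarrow> 'b::euclidean_space"
  assumes T: "bounded_linear T" and ac: "ac_with_deriv a b f g"
  shows "ac_with_deriv a b (\<lambda>x. T (f x)) (\<lambda>x. T (g x))"
proof -
  have gi: "integrable lborel (\<lambda>x. indicator {a..b} x *\<^sub>R g x)"
    using ac unfolding ac_with_deriv_def set_integrable_def by blast
  have eqf: "(\<lambda>x. T (indicator {a..b} x *\<^sub>R g x)) = (\<lambda>x. indicator {a..b} x *\<^sub>R T (g x))"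
    using linear_scale[OF bounded_linear.linear[OF T]] by (auto simp: indicator_def)
  have si: "set_integrable lborel {a..b} (\<lambda>x. T (g x))"
    unfolding set_integrable_def using integrable_bounded_linear[OF T gi] eqf by simp
  have "T (f x) = T (f a) + (LINT t:{a..x}|lborel. T (g t))" if x: "x \<in> {a..b}" for x
  proof -
    have gx: "integrable lborel (\<lambda>t. indicator {a..x} t *\<^sub>R g t)"
      using set_integrable_subset[of lborel "{a..b}" g "{a..x}"] ac x
      unfolding ac_with_deriv_def set_integrable_def by auto
    have e: "(\<lambda>t. T (indicator {a..x} t *\<^sub>R g t)) = (\<lambda>t. indicator {a..x} t *\<^sub>R T (g t))"
      using linear_scale[OF bounded_linear.linear[OF T]] by (auto simp: indicator_def)
    have "(LINT t:{a..x}|lborel. T (g t)) = T (LINT t:{a..x}|lborel. g t)"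
      unfolding set_lebesgue_integral_def using integral_bounded_linear[OF T gx] e by simp
    moreover have "f x = f a + (LINT t:{a..x}|lborel. g t)" using ac x unfolding ac_with_deriv_def by blast
    ultimately show ?thesis using linear_add[OF bounded_linear.linear[OF T]] by metis
  qed
  then show ?thesis using si unfolding ac_with_deriv_def by blast
qed

lemma ac_add:
  fixes f g h k :: "real \<Rightarrow> real"
  assumes "ac_with_deriv a b f g" "ac_with_deriv a b h k"
  shows "ac_with_deriv a b (\<lambda>x. f x + h x) (\<lambda>x. g x + k x)"
proof -
  have s: "set_integrable lborel {a..b} g" "set_integrable lborel {a..b} k"
    using assms unfolding ac_with_deriv_def by blast+
  have "f x + h x = (f a + h a) + (LINT t:{a..x}|lborel. g t + k t)" if x: "x \<in> {a..b}" for x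
  proof -
    have s2: "set_integrable lborel {a..x} g" "set_integrable lborel {a..x} k"
      using s x by (auto intro: set_integrable_subset)
    have "f x = f a + (LINT t:{a..x}|lborel. g t)" "h x = h a + (LINT t:{a..x}|lborel. k t)"
      using assms x unfolding ac_with_deriv_def by blast+
    then show ?thesis using set_integral_add(2)[OF s2] by simp
  qed
  then show ?thesis using set_integral_add(1)[OF s] unfolding ac_with_deriv_def by blast
qed

lemma ac_diff:
  fixes f g h k :: "real \<Rightarrow> real"
  assumes "ac_with_deriv a b f g" "ac_with_deriv a b h k"
  shows "ac_with_deriv a b (\<lambda>x. f x - h x) (\<lambda>x. g x - k x)"
proof -
  have s: "set_integrable lborel {a..b} g" "set_integrable lborel {a..b} k"
    using assms unfolding ac_with_deriv_def by blast+
  have "f x - h x = (f a - h a) + (LINT t:{a..x}|lborel. g t - k t)" if x: "x \<in> {a..b}" for x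
  proof -
    have s2: "set_integrable lborel {a..x} g" "set_integrable lborel {a..x} k"
      using s x by (auto intro: set_integrable_subset)
    have "f x = f a + (LINT t:{a..x}|lborel. g t)" "h x = h a + (LINT t:{a..x}|lborel. k t)"
      using assms x unfolding ac_with_deriv_def by blast+
    then show ?thesis using set_integral_diff(2)[OF s2] by simp
  qed
  then show ?thesis using set_integral_diff(1)[OF s] unfolding ac_with_deriv_def by blast
qed

lemma ac_AE_cong:
  fixes f g g' :: "real \<Rightarrow> real"
  assumes ac: "ac_with_deriv a b f g" and si: "set_integrable lborel {a..b} g'"
    and ae: "AE x in lborel. x \<in> {a..b} \<longrightarrow> g x = g' x"
  shows "ac_with_deriv a b f g'"
proof -
  have s: "set_integrable lborel {a..b} g" using ac unfolding ac_with_deriv_def by blast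
  have "f x = f a + (LINT t:{a..x}|lborel. g' t)" if x: "x \<in> {a..b}" for x
  proof -
    have "set_integrable lborel {a..x} g" "set_integrable lborel {a..x} g'"
      by (rule set_integrable_subset[OF s], use x in auto, rule set_integrable_subset[OF si], use x in auto)
    then have "integrable lborel (\<lambda>t. indicator {a..x} t *\<^sub>R g t)" "integrable lborel (\<lambda>t. indicator {a..x} t *\<^sub>R g' t)"
      unfolding set_integrable_def by auto
    moreover have "AE t in lborel. indicator {a..x} t *\<^sub>R g t = indicator {a..x} t *\<^sub>R g' t"
      using ae by eventually_elim (use x in \<open>auto simp: indicator_def\<close>)
    ultimately have "(LINT t:{a..x}|lborel. g t) = (LINT t:{a..x}|lborel. g' t)"
      unfolding set_lebesgue_integral_def by (intro integral_cong_AE) auto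
    moreover have "f x = f a + (LINT t:{a..x}|lborel. g t)" using ac x unfolding ac_with_deriv_def by blast
    ultimately show ?thesis by simp
  qed
  then show ?thesis using si unfolding ac_with_deriv_def by blast
qed



lemma alg1:
  fixes pp qq rr ss PP QQ :: real
  assumes "pp^2 + qq^2 = 1" "pp * rr + qq * ss = 0" "pp * PP + qq * QQ = 0"
  shows "PP * ss - QQ * rr = 0"
  using assms by algebra

lemma alg2:
  fixes pp qq rr ss PP QQ RR SS :: real
  assumes "pp^2 + qq^2 = 1" "pp * rr + qq * ss = 0" "pp * PP + qq * QQ = 0" "PP * rr + pp * RR + QQ * ss + qq * SS = 0"
  shows "RR^2 + SS^2 = (pp * SS - qq * RR)^2 + (PP^2 + QQ^2) * (rr^2 + ss^2)"
  using assms by algebra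

lemma alg3:
  fixes pp qq rr ss :: real
  assumes "pp^2 + qq^2 = 1" "pp * rr + qq * ss = 0"
  shows "rr^2 + ss^2 = (pp * ss - qq * rr)^2"
  using assms by algebra

lemma alg4:
  fixes pp qq RR SS :: real
  assumes "pp^2 + qq^2 = 1"
  shows "(pp * SS - qq * RR)^2 \<le> RR^2 + SS^2"
proof -
  have "(pp * SS - qq * RR)^2 + (pp * RR + qq * SS)^2 = RR^2 + SS^2" using assms by algebra
  moreover have "(pp * RR + qq * SS)^2 \<ge> 0" by simp
  ultimately show ?thesis by linarith
qed

lemma inner_vec2: "(y::real^2) \<bullet> z = y$1 * z$1 + y$2 * z$2"
  by (simp add: inner_vec_def sum_2)

lemma norm2_vec2: "(norm (y::real^2))^2 = (y$1)^2 + (y$2)^2"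
  unfolding power2_norm_eq_inner inner_vec2 by (simp add: power2_eq_square)



lemma poincare1:
  fixes \<phi> \<psi> :: "real \<Rightarrow> real"
  assumes ac: "ac_with_deriv a b \<phi> \<psi>" and \<phi>a: "\<phi> a = 0"
    and sq: "set_integrable lborel {a..b} (\<lambda>t. (\<psi> t)^2)"
    and x: "x \<in> {a..b}"
  shows "(\<phi> x)^2 \<le> (b - a) * (LINT t:{a..b}|lborel. (\<psi> t)^2)"
proof -
  have ax: "a \<le> x" "x \<le> b" using x by auto
  have \<psi>i: "\<psi> integrable_on {a..x}"
    by (rule integrable_on_subinterval[OF ac_HK(1)[OF ac]]) (use ax in auto)
  have sab: "(\<lambda>t. (\<psi> t)^2) integrable_on {a..b}" by (rule set_int_sub(3)[OF sq]) auto
  have sax: "(\<lambda>t. (\<psi> t)^2) integrable_on {a..x}" by (rule set_int_sub(3)[OF sq]) (use ax in auto)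
  have A: "(LINT t:{a..b}|lborel. (\<psi> t)^2) = integral {a..b} (\<lambda>t. (\<psi> t)^2)"
    by (rule set_int_sub(2)[OF sq]) auto
  have J: "integral {a..x} \<psi> = \<phi> x" using ac_diff_integral[OF ac, of a x] ax \<phi>a by simp
  have AxA: "integral {a..x} (\<lambda>t. (\<psi> t)^2) \<le> integral {a..b} (\<lambda>t. (\<psi> t)^2)"
    by (rule integral_subset_le[OF _ sax sab]) (use ax in auto)
  have Ax0: "0 \<le> integral {a..x} (\<lambda>t. (\<psi> t)^2)" by (rule integral_nonneg[OF sax]) simp
  have main: "(\<phi> x)^2 \<le> (x - a) * integral {a..x} (\<lambda>t. (\<psi> t)^2)"
  proof (cases "x = a")
    case True then show ?thesis using \<phi>a by simp
  next
    case False
    then have L: "x - a > 0" using ax by auto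
    define c where "c = \<phi> x / (x - a)"
    have ci: "(\<lambda>t. \<psi> t * (2 * c) - c^2) integrable_on {a..x}"
      by (intro integrable_diff integrable_on_mult_left \<psi>i integrable_const_ivl)
    have "integral {a..x} (\<lambda>t. \<psi> t * (2 * c) - c^2) \<le> integral {a..x} (\<lambda>t. (\<psi> t)^2)"
    proof (rule integral_le[OF ci sax])
      fix t
      have "0 \<le> (\<psi> t - c)^2" by simp
      moreover have "(\<psi> t - c)^2 = (\<psi> t)^2 - \<psi> t * (2 * c) + c^2" by (simp add: power2_diff algebra_simps)
      ultimately show "\<psi> t * (2 * c) - c^2 \<le> (\<psi> t)^2" by linarith
    qed
    moreover have "integral {a..x} (\<lambda>t. \<psi> t * (2 * c) - c^2) = \<phi> x * (2 * c) - c^2 * (x - a)"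
      using integral_diff[OF integrable_on_mult_left[OF \<psi>i] integrable_const_ivl] J ax by simp
    moreover have "\<phi> x * (2 * c) - c^2 * (x - a) = (\<phi> x)^2 / (x - a)"
    proof -
      have gen: "\<And>y d::real. d \<noteq> 0 \<Longrightarrow> y * (2 * (y / d)) - (y / d)^2 * d = y^2 / d"
        by (simp add: field_simps power2_eq_square)
      show ?thesis unfolding c_def by (rule gen) (use L in auto)
    qed
    ultimately have "(\<phi> x)^2 / (x - a) \<le> integral {a..x} (\<lambda>t. (\<psi> t)^2)" by simp
    then show ?thesis using L by (simp add: field_simps)
  qed
  also have "\<dots> \<le> (b - a) * integral {a..b} (\<lambda>t. (\<psi> t)^2)"
    by (rule mult_mono) (use ax AxA Ax0 in auto)
  finally show ?thesis unfolding A .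
qed



lemma vbound:
  fixes v v1 :: "real \<Rightarrow> real^2"
  assumes ac: "ac_with_deriv a b v v1" and va: "v a = 0" and x: "x \<in> {a..b}"
    and M: "\<And>t. t \<in> {a..b} \<Longrightarrow> norm (v1 t) \<le> M"
  shows "norm (v x) \<le> (b - a) * M"
proof -
  have ax: "a \<le> x" "x \<le> b" using x by auto
  have M0: "0 \<le> M" using M[of a] ax by (meson atLeastAtMost_iff norm_ge_zero order_trans order_refl)
  have i: "v1 integrable_on {a..x}"
    by (rule integrable_on_subinterval[OF ac_HK(1)[OF ac]]) (use ax in auto)
  have "v x = integral {a..x} v1" using ac_diff_integral[OF ac, of a x] ax va by simp
  also have "norm \<dots> \<le> integral {a..x} (\<lambda>t. M)"
    by (rule integral_norm_bound_integral[OF i integrable_const_ivl]) (use M ax in auto)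
  also have "\<dots> = (x - a) * M" using ax by simp
  also have "\<dots> \<le> (b - a) * M" using ax M0 by (intro mult_right_mono) auto
  finally show ?thesis .
qed

lemma sq_integrable_bound:
  fixes \<psi> :: "real \<Rightarrow> real" and w :: "real \<Rightarrow> real^2"
  assumes \<psi>s: "set_integrable lborel {a..b} \<psi>"
    and ws: "set_integrable lborel {a..b} (\<lambda>x. (norm (w x))^2)"
    and le: "\<And>x. x \<in> {a..b} \<Longrightarrow> (\<psi> x)^2 \<le> (norm (w x))^2"
  shows "set_integrable lborel {a..b} (\<lambda>x. (\<psi> x)^2)"
  unfolding set_integrable_def
proof (rule Bochner_Integration.integrable_bound[where f="\<lambda>x. indicator {a..b} x *\<^sub>R (norm (w x))^2"])
  show "integrable lborel (\<lambda>x. indicator {a..b} x *\<^sub>R (norm (w x))\<^sup>2)"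
    using ws unfolding set_integrable_def .
  have m: "(\<lambda>x. indicator {a..b} x *\<^sub>R \<psi> x) \<in> borel_measurable lborel"
    using \<psi>s unfolding set_integrable_def by (rule borel_measurable_integrable)
  have "(\<lambda>x. (indicator {a..b} x *\<^sub>R \<psi> x)^2) \<in> borel_measurable lborel" using m by measurable
  moreover have "(\<lambda>x. (indicator {a..b} x *\<^sub>R \<psi> x)^2) = (\<lambda>x. indicator {a..b} x *\<^sub>R (\<psi> x)^2)"
    by (auto simp: indicator_def)
  ultimately show "(\<lambda>x. indicator {a..b} x *\<^sub>R (\<psi> x)\<^sup>2) \<in> borel_measurable lborel" by simp
  show "AE x in lborel. norm (indicator {a..b} x *\<^sub>R (\<psi> x)\<^sup>2) \<le> norm (indicator {a..b} x *\<^sub>R (norm (w x))\<^sup>2)"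
    by (intro AE_I2) (auto simp: indicator_def le)
qed



theorem mainTheorem6:
  fixes a b :: real and u u1 u2 :: "real \<Rightarrow> real^2"
  assumes "a < b"
    and "W2inf_with_derivs a b u u1 u2"
    and "\<forall>x\<in>{a..b}. (norm (u1 x))\<^sup>2 = 1"
  shows "\<exists>\<alpha>>0. \<forall>v v1 v2.
           H2_with_derivs a b v v1 v2 \<and>
           (\<forall>x\<in>{a..b}. u1 x \<bullet> v1 x = 0) \<and> v a = 0 \<and> v1 a = 0
           \<longrightarrow> a_form a b (\<lambda>x. - (norm (u2 x))\<^sup>2) v1 v2 v1 v2 \<ge> \<alpha> * H2_norm_sq a b v v1 v2"
proof -
  have ab: "a \<le> b" using assms(1) by simp
  have acu: "ac_with_deriv a b u1 u2" using assms(2) unfolding W2inf_with_derivs_def by blast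
  obtain C where C: "AE x in lborel. x \<in> {a..b} \<longrightarrow> norm (u2 x) \<le> C"
    using assms(2) unfolding W2inf_with_derivs_def by blast
  define pp where "pp = (\<lambda>x. u1 x $ 1)"
  define qq where "qq = (\<lambda>x. u1 x $ 2)"
  define PP where "PP = (\<lambda>x. u2 x $ 1)"
  define QQ where "QQ = (\<lambda>x. u2 x $ 2)"
  have acp: "ac_with_deriv a b pp PP" unfolding pp_def PP_def by (rule ac_linear[OF bounded_linear_vec_nth acu])
  have acq: "ac_with_deriv a b qq QQ" unfolding qq_def QQ_def by (rule ac_linear[OF bounded_linear_vec_nth acu])
  have unit: "(pp x)^2 + (qq x)^2 = 1" if "x \<in> {a..b}" for x
    using assms(3) that by (simp add: pp_def qq_def norm2_vec2)
  have cp: "continuous_on {a..b} pp" by (rule ac_cont[OF acp])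
  have cq: "continuous_on {a..b} qq" by (rule ac_cont[OF acq])
  have u2n: "(norm (u2 x))^2 = (PP x)^2 + (QQ x)^2" for x by (simp add: PP_def QQ_def norm2_vec2)
  have pP: "AE x in lborel. x \<in> {a..b} \<longrightarrow> pp x * PP x + qq x * QQ x = 0"
  proof -
    have "ac_with_deriv a b (\<lambda>x. pp x * pp x + qq x * qq x)
        (\<lambda>x. (PP x * pp x + pp x * PP x) + (QQ x * qq x + qq x * QQ x))"
      by (rule ac_add[OF ac_mult[OF acp acp] ac_mult[OF acq acq]])
    moreover have "\<forall>x\<in>{a..b}. pp x * pp x + qq x * qq x = 1" using unit by (simp add: power2_eq_square)
    ultimately have "AE x in lborel. x \<in> {a..b} \<longrightarrow> (PP x * pp x + pp x * PP x) + (QQ x * qq x + qq x * QQ x) = 0"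
      by (rule ac_const_deriv_zero)
    moreover have eq: "(PP x * pp x + pp x * PP x) + (QQ x * qq x + qq x * QQ x) = 2 * (pp x * PP x + qq x * QQ x)" for x
      by (simp add: algebra_simps)
    ultimately have "AE x in lborel. x \<in> {a..b} \<longrightarrow> 2 * (pp x * PP x + qq x * QQ x) = 0"
      by (simp only: eq)
    then show ?thesis by eventually_elim (auto simp: algebra_simps)
  qed
  define K where "K = 1 + (b - a)^2 * ((b - a)^2 + 1 + C^2)"
  have K0: "K > 0" unfolding K_def by (intro add_pos_nonneg) auto
  show ?thesis
  proof (intro exI[of _ "1/K"] conjI allI impI)
    show "1/K > 0" using K0 by simp
    fix v v1 v2 :: "real \<Rightarrow> real^2"
    assume H: "H2_with_derivs a b v v1 v2 \<and> (\<forall>x\<in>{a..b}. u1 x \<bullet> v1 x = 0) \<and> v a = 0 \<and> v1 a = 0"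
    have acv: "ac_with_deriv a b v v1" and acv1: "ac_with_deriv a b v1 v2"
      and v2s: "set_integrable lborel {a..b} (\<lambda>x. (norm (v2 x))^2)"
      using H unfolding H2_with_derivs_def by auto
    have orth: "\<forall>x\<in>{a..b}. u1 x \<bullet> v1 x = 0" and va: "v a = 0" and v1a: "v1 a = 0" using H by auto
    define rr where "rr = (\<lambda>x. v1 x $ 1)"
    define ss where "ss = (\<lambda>x. v1 x $ 2)"
    define RR where "RR = (\<lambda>x. v2 x $ 1)"
    define SS where "SS = (\<lambda>x. v2 x $ 2)"
    have acr: "ac_with_deriv a b rr RR" unfolding rr_def RR_def by (rule ac_linear[OF bounded_linear_vec_nth acv1])
    have acs: "ac_with_deriv a b ss SS" unfolding ss_def SS_def by (rule ac_linear[OF bounded_linear_vec_nth acv1])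
    have orth': "pp x * rr x + qq x * ss x = 0" if "x \<in> {a..b}" for x
      using orth that by (simp add: inner_vec2 pp_def qq_def rr_def ss_def)
    have v1n: "(norm (v1 x))^2 = (rr x)^2 + (ss x)^2" for x by (simp add: rr_def ss_def norm2_vec2)
    have v2n: "(norm (v2 x))^2 = (RR x)^2 + (SS x)^2" for x by (simp add: RR_def SS_def norm2_vec2)
    have rR: "AE x in lborel. x \<in> {a..b} \<longrightarrow> PP x * rr x + pp x * RR x + QQ x * ss x + qq x * SS x = 0"
    proof -
      have "ac_with_deriv a b (\<lambda>x. pp x * rr x + qq x * ss x)
          (\<lambda>x. (PP x * rr x + pp x * RR x) + (QQ x * ss x + qq x * SS x))"
        by (rule ac_add[OF ac_mult[OF acp acr] ac_mult[OF acq acs]])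
      moreover have "\<forall>x\<in>{a..b}. pp x * rr x + qq x * ss x = 0" using orth' by blast
      ultimately have "AE x in lborel. x \<in> {a..b} \<longrightarrow> (PP x * rr x + pp x * RR x) + (QQ x * ss x + qq x * SS x) = 0"
        by (rule ac_const_deriv_zero)
      then show ?thesis by (simp add: add.assoc)
    qed
    define \<phi> where "\<phi> = (\<lambda>x. pp x * ss x - qq x * rr x)"
    define \<psi> where "\<psi> = (\<lambda>x. pp x * SS x - qq x * RR x)"
    have ac\<phi>0: "ac_with_deriv a b \<phi> (\<lambda>x. (PP x * ss x + pp x * SS x) - (QQ x * rr x + qq x * RR x))"
      unfolding \<phi>_def by (rule ac_diff[OF ac_mult[OF acp acs] ac_mult[OF acq acr]])
    have Ss: "set_integrable lborel {a..b} SS" using acs unfolding ac_with_deriv_def by blast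
    have Rs: "set_integrable lborel {a..b} RR" using acr unfolding ac_with_deriv_def by blast
    have \<psi>s: "set_integrable lborel {a..b} \<psi>"
    proof -
      have "set_integrable lborel {a..b} (\<lambda>x. SS x * pp x)" by (rule set_integrable_mult_cont[OF Ss cp])
      moreover have "set_integrable lborel {a..b} (\<lambda>x. RR x * qq x)" by (rule set_integrable_mult_cont[OF Rs cq])
      ultimately have "set_integrable lborel {a..b} (\<lambda>x. SS x * pp x - RR x * qq x)" by (rule set_integral_diff(1))
      then show ?thesis unfolding \<psi>_def by (simp add: mult.commute)
    qed
    have ac\<phi>: "ac_with_deriv a b \<phi> \<psi>"
    proof (rule ac_AE_cong[OF ac\<phi>0 \<psi>s])
      show "AE x in lborel. x \<in> {a..b} \<longrightarrow> (PP x * ss x + pp x * SS x) - (QQ x * rr x + qq x * RR x) = \<psi> x"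
        using pP
      proof eventually_elim
        case (elim x)
        show ?case
        proof
          assume x: "x \<in> {a..b}"
          have "PP x * ss x - QQ x * rr x = 0"
            by (rule alg1[OF unit[OF x] orth'[OF x]]) (use elim x in auto)
          then show "(PP x * ss x + pp x * SS x) - (QQ x * rr x + qq x * RR x) = \<psi> x"
            unfolding \<psi>_def by linarith
        qed
      qed
    qed
    have \<phi>a: "\<phi> a = 0" using v1a by (simp add: \<phi>_def rr_def ss_def)
    have \<psi>2le: "(\<psi> x)^2 \<le> (norm (v2 x))^2" if "x \<in> {a..b}" for x
      unfolding \<psi>_def v2n by (rule alg4[OF unit[OF that]])
    have \<psi>2s: "set_integrable lborel {a..b} (\<lambda>x. (\<psi> x)^2)"
      by (rule sq_integrable_bound[OF \<psi>s v2s \<psi>2le])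
    define A where "A = (LINT t:{a..b}|lborel. (\<psi> t)^2)"
    have A0: "A \<ge> 0"
    proof -
      have "A = integral {a..b} (\<lambda>t. (\<psi> t)^2)" unfolding A_def by (rule set_int_sub(2)[OF \<psi>2s]) auto
      also have "\<dots> \<ge> 0" by (rule integral_nonneg[OF set_int_sub(3)[OF \<psi>2s]]) auto
      finally show ?thesis .
    qed
    have \<phi>2: "(\<phi> x)^2 \<le> (b - a) * A" if "x \<in> {a..b}" for x
      using poincare1[OF ac\<phi> \<phi>a \<psi>2s that] unfolding A_def .
    have v1b: "(norm (v1 x))^2 \<le> (b - a) * A" if x: "x \<in> {a..b}" for x
    proof -
      have "(norm (v1 x))^2 = (\<phi> x)^2" unfolding v1n \<phi>_def by (rule alg3[OF unit[OF x] orth'[OF x]])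
      then show ?thesis using \<phi>2[OF x] by simp
    qed
    define M where "M = sqrt ((b - a) * A)"
    have M0: "M \<ge> 0" unfolding M_def using ab A0 by simp
    have M2: "M^2 = (b - a) * A" unfolding M_def using ab A0 by simp
    have v1M: "norm (v1 x) \<le> M" if "x \<in> {a..b}" for x
      unfolding M_def by (rule real_le_rsqrt[OF v1b[OF that]])
    have vb: "(norm (v x))^2 \<le> (b - a)^3 * A" if x: "x \<in> {a..b}" for x
    proof -
      have "norm (v x) \<le> (b - a) * M" by (rule vbound[OF acv va x v1M])
      then have "(norm (v x))^2 \<le> ((b - a) * M)^2" by (intro power_mono) auto
      also have "\<dots> = (b - a)^3 * A" by (simp add: power_mult_distrib M2 power3_eq_cube power2_eq_square[of "b - a"])
      finally show ?thesis .
    qed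
    have v2b: "AE x in lborel. x \<in> {a..b} \<longrightarrow> (norm (v2 x))^2 \<le> (\<psi> x)^2 + C^2 * ((b - a) * A)"
      using pP rR C
    proof eventually_elim
      case (elim x)
      show ?case
      proof
        assume x: "x \<in> {a..b}"
        have e: "(norm (v2 x))^2 = (\<psi> x)^2 + (norm (u2 x))^2 * (norm (v1 x))^2"
          unfolding v2n u2n v1n \<psi>_def
          by (rule alg2[OF unit[OF x] orth'[OF x]]) (use elim x in auto)
        have "(norm (u2 x))^2 \<le> C^2" using elim x by (intro power_mono) auto
        then have "(norm (u2 x))^2 * (norm (v1 x))^2 \<le> C^2 * ((b - a) * A)"
          using v1b[OF x] by (intro mult_mono) auto
        then show "(norm (v2 x))^2 \<le> (\<psi> x)^2 + C^2 * ((b - a) * A)" using e by linarith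
      qed
    qed
    define K1 where "K1 = (b - a)^3 * A + (b - a) * A + C^2 * ((b - a) * A)"
    have e2: "(norm (v2 x))^2 = (\<psi> x)^2 + (norm (u2 x))^2 * (norm (v1 x))^2"
      if x: "x \<in> {a..b}" and h1: "pp x * PP x + qq x * QQ x = 0"
        and h2: "PP x * rr x + pp x * RR x + QQ x * ss x + qq x * SS x = 0" for x
      unfolding v2n u2n v1n \<psi>_def by (rule alg2[OF unit[OF x] orth'[OF x] h1 h2])
    have cv: "continuous_on {a..b} v" by (rule ac_cont[OF acv])
    have cv1: "continuous_on {a..b} v1" by (rule ac_cont[OF acv1])
    have i1: "set_integrable lborel {a..b} (\<lambda>x. (norm (v x))^2)"
      by (rule borel_integrable_atLeastAtMost') (intro continuous_intros cv)
    have i2: "set_integrable lborel {a..b} (\<lambda>x. (norm (v1 x))^2)"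
      by (rule borel_integrable_atLeastAtMost') (intro continuous_intros cv1)
    have iL: "set_integrable lborel {a..b} (\<lambda>x. (norm (v x))^2 + (norm (v1 x))^2 + (norm (v2 x))^2)"
      by (intro set_integral_add(1) i1 i2 v2s)
    have iK: "set_integrable lborel {a..b} (\<lambda>x. K1)"
      by (rule borel_integrable_atLeastAtMost') (rule continuous_on_const)
    have iR: "set_integrable lborel {a..b} (\<lambda>x. K1 + (\<psi> x)^2)"
      by (intro set_integral_add(1) iK \<psi>2s)
    have H2: "H2_norm_sq a b v v1 v2 \<le> (b - a) * K1 + A"
    proof -
      have "H2_norm_sq a b v v1 v2 \<le> (LINT x:{a..b}|lborel. K1 + (\<psi> x)^2)"
        unfolding H2_norm_sq_def
      proof (rule set_integral_mono_AE[OF iL iR])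
        show "AE x\<in>{a..b} in lborel. (norm (v x))^2 + (norm (v1 x))^2 + (norm (v2 x))^2 \<le> K1 + (\<psi> x)^2"
          using v2b
        proof eventually_elim
          case (elim x)
          show ?case
          proof
            assume x: "x \<in> {a..b}"
            show "(norm (v x))^2 + (norm (v1 x))^2 + (norm (v2 x))^2 \<le> K1 + (\<psi> x)^2"
              using elim x vb[OF x] v1b[OF x] unfolding K1_def by linarith
          qed
        qed
      qed
      also have "(LINT x:{a..b}|lborel. K1 + (\<psi> x)^2) = integral {a..b} (\<lambda>x. K1 + (\<psi> x)^2)"
        by (rule set_int_sub(2)[OF iR]) auto
      also have "\<dots> = integral {a..b} (\<lambda>x. K1) + integral {a..b} (\<lambda>x. (\<psi> x)^2)"
        by (rule integral_add[OF integrable_const_ivl set_int_sub(3)[OF \<psi>2s]]) auto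
      also have "integral {a..b} (\<lambda>x. (\<psi> x)^2) = A"
        unfolding A_def by (rule set_int_sub(2)[OF \<psi>2s, symmetric]) auto
      also have "integral {a..b} (\<lambda>x. K1) = (b - a) * K1" using ab by simp
      finally show ?thesis .
    qed
    have aform: "a_form a b (\<lambda>x. - (norm (u2 x))\<^sup>2) v1 v2 v1 v2 = A"
      unfolding a_form_def A_def set_lebesgue_integral_def
    proof (rule integral_cong_AE)
      have mW: "(\<lambda>x. indicator {a..b} x *\<^sub>R v2 x) \<in> borel_measurable lborel"
        using acv1 unfolding ac_with_deriv_def set_integrable_def by (blast intro: borel_measurable_integrable)
      have mU: "(\<lambda>x. indicator {a..b} x *\<^sub>R u2 x) \<in> borel_measurable lborel"
        using acu unfolding ac_with_deriv_def set_integrable_def by (blast intro: borel_measurable_integrable)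
      have mV: "(\<lambda>x. indicator {a..b} x *\<^sub>R v1 x) \<in> borel_measurable borel"
        by (rule borel_measurable_continuous_on_indicator[OF _ cv1]) auto
      have "(\<lambda>x. (indicator {a..b} x *\<^sub>R v2 x) \<bullet> (indicator {a..b} x *\<^sub>R v2 x)
          + (- ((norm (indicator {a..b} x *\<^sub>R u2 x))^2)) * ((indicator {a..b} x *\<^sub>R v1 x) \<bullet> (indicator {a..b} x *\<^sub>R v1 x)))
          \<in> borel_measurable lborel"
        using mW mU mV by measurable
      moreover have "(\<lambda>x. (indicator {a..b} x *\<^sub>R v2 x) \<bullet> (indicator {a..b} x *\<^sub>R v2 x)
          + (- ((norm (indicator {a..b} x *\<^sub>R u2 x))^2)) * ((indicator {a..b} x *\<^sub>R v1 x) \<bullet> (indicator {a..b} x *\<^sub>R v1 x)))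
        = (\<lambda>x. indicator {a..b} x *\<^sub>R (v2 x \<bullet> v2 x + - (norm (u2 x))\<^sup>2 * (v1 x \<bullet> v1 x)))"
        by (auto simp: indicator_def)
      ultimately show "(\<lambda>x. indicator {a..b} x *\<^sub>R (v2 x \<bullet> v2 x + - (norm (u2 x))\<^sup>2 * (v1 x \<bullet> v1 x)))
          \<in> borel_measurable lborel" by simp
      show "(\<lambda>x. indicator {a..b} x *\<^sub>R (\<psi> x)^2) \<in> borel_measurable lborel"
        using \<psi>2s unfolding set_integrable_def by (rule borel_measurable_integrable)
      show "AE x in lborel. indicator {a..b} x *\<^sub>R (v2 x \<bullet> v2 x + - (norm (u2 x))\<^sup>2 * (v1 x \<bullet> v1 x))
          = indicator {a..b} x *\<^sub>R (\<psi> x)^2"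
        using pP rR
      proof eventually_elim
        case (elim x)
        show ?case
        proof (cases "x \<in> {a..b}")
          case True
          have "v2 x \<bullet> v2 x + - (norm (u2 x))\<^sup>2 * (v1 x \<bullet> v1 x) = (\<psi> x)^2"
            using e2[OF True] elim True by (simp add: dot_square_norm)
          then show ?thesis using True by simp
        qed simp
      qed
    qed
    have KA: "(b - a) * K1 + A = K * A" unfolding K1_def K_def by (simp add: algebra_simps power2_eq_square power3_eq_cube)
    have "1 / K * H2_norm_sq a b v v1 v2 \<le> 1 / K * (K * A)"
      using H2 KA K0 by (intro mult_left_mono) auto
    also have "\<dots> = A" using K0 by simp
    finally show "a_form a b (\<lambda>x. - (norm (u2 x))\<^sup>2) v1 v2 v1 v2 \<ge> 1 / K * H2_norm_sq a b v v1 v2"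
      using aform by simp
  qed
qed


end
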